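(* Assume the all-zero codeword is transmitted and $y\in\Sigma^n$ is received. (1) If the LP decoder makes a codeword error, then there exists an LP pseudocodeword $(h,z)$ with $h\ne0$ and $\Lambda(y)h^T\le0$. (2) If there exists an LP pseudocodeword $(h,z)$ with $h\ne0$ and $\Lambda(y)h^T<0$, then the LP decoder makes a codeword error.
   Context: Let $R$ be a finite ring with $q$ elements, $R^-=R\setminus\{0\}$, $\mathcal H$ an $m\times n$ matrix over $R$, $\mathcal C=\{c\in R^n:c\mathcal H^T=0\}$, $\mathcal I=\{1,\dots,n\}$, $\mathcal J=\{1,\dots,m\}$, $\mathcal I_j=\{i:\mathcal H_{j,i}\ne0\}$, $\mathcal C_j=\{b\in R^{\mathcal I_j}:\sum_{i\in\mathcal I_j}b_i\mathcal H_{j,i}=0\}$. Vectors in $\mathbb R^{(q-1)n}$ have coordinates $f_i^{(\alpha)}$, $i\in\mathcal I$, $\alpha\in R^-$. $\mathcal Q$ is the set of $(f,w)$, $f\in\mathbb R^{(q-1)n}$, $w=(w_{j,b})_{j\in\mathcal J,b\in\mathcal C_j}$, with $w_{j,b}\ge0$, $\sum_{b\in\mathcal C_j}w_{j,b}=1$ for each $j$, and $f_i^{(\alpha)}=\sum_{b\in\mathcal C_j,b_i=\alpha}w_{j,b}$ for all $j$, $i\in\mathcal I_j$, $\alpha\in R^-$. The channel is memoryless with input alphabet $R$, output alphabet $\Sigma$, transition probability (density) $p(y\mid a)$; $\lambda^{(\alpha)}(y)=\log(p(y\mid0)/p(y\mid\alpha))$ and $\Lambda(y)$ has coordinates $\lambda^{(\alpha)}(y_i)$.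 The LP decoder selects a minimizer $(f,w)$ of $\Lambda(y)f^T$ over $\mathcal Q$; with the all-zero codeword transmitted, it makes a codeword error when the selected $f$ is not the zero vector. An LP pseudocodeword is a pair $(h,z)$ with $h\in\mathbb R^{(q-1)n}$ and $z=(z_{j,b})_{j\in\mathcal J,b\in\mathcal C_j}$ nonnegative integers such that $h_i^{(\alpha)}=\sum_{b\in\mathcal C_j,b_i=\alpha}z_{j,b}$ for all $j\in\mathcal J$, $i\in\mathcal I_j$, $\alpha\in R^-$, and $\sum_{b\in\mathcal C_j}z_{j,b}=M$ for all $j$, with $M$ a nonnegative integer independent of $j$. *)

theory Defs
  imports Complex_Main
begin

text \<open>
  Coordinates I = {1..n}, checks J = {1..m}; the parity-check matrix is
  H :: nat => nat => 'r with H j i the (j,i) entry.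
  A vector f in the real space with coordinates f_i^(alpha), i in I,
  alpha in R minus 0, is a function f :: nat => 'r => real, f i alpha;
  only the values with i in {1..n} and alpha nonzero are meaningful.
  A local word b in R^(I_j) is a function nat => 'r vanishing outside I_j.
  The channel transition probability p(y|a) is p y a.
\<close>

definition supp_row :: "(nat \<Rightarrow> nat \<Rightarrow> 'r::{ring,finite}) \<Rightarrow> nat \<Rightarrow> nat \<Rightarrow> nat set" where
  "supp_row H n j = {i \<in> {1..n}. H j i \<noteq> 0}"

definition local_code :: "(nat \<Rightarrow> nat \<Rightarrow> 'r::{ring,finite}) \<Rightarrow> nat \<Rightarrow> nat \<Rightarrow> (nat \<Rightarrow> 'r) set" where
  "local_code H n j = {b. (\<forall>i. i \<notin> supp_row H n j \<longrightarrow> b i = 0) \<and>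
                          (\<Sum>i\<in>supp_row H n j. b i * H j i) = 0}"

definition in_polytope_Q ::
  "(nat \<Rightarrow> nat \<Rightarrow> 'r::{ring,finite}) \<Rightarrow> nat \<Rightarrow> nat \<Rightarrow> (nat \<Rightarrow> 'r \<Rightarrow> real)
     \<Rightarrow> (nat \<Rightarrow> (nat \<Rightarrow> 'r) \<Rightarrow> real) \<Rightarrow> bool" where
  "in_polytope_Q H n m f w \<longleftrightarrow>
     (\<forall>j\<in>{1..m}.
        (\<forall>b\<in>local_code H n j. w j b \<ge> 0) \<and>
        (\<Sum>b\<in>local_code H n j. w j b) = 1 \<and>
        (\<forall>i\<in>supp_row H n j. \<forall>\<alpha>. \<alpha> \<noteq> 0 \<longrightarrow>
            f i \<alpha> = (\<Sum>b\<in>{b\<in>local_code H n j. b i = \<alpha>}. w j b)))"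

definition llr :: "('s \<Rightarrow> 'r::{ring,finite} \<Rightarrow> real) \<Rightarrow> 'r \<Rightarrow> 's \<Rightarrow> real" where
  "llr p \<alpha> t = ln (p t 0 / p t \<alpha>)"

definition cost :: "nat \<Rightarrow> ('s \<Rightarrow> 'r::{ring,finite} \<Rightarrow> real) \<Rightarrow> (nat \<Rightarrow> 's) \<Rightarrow> (nat \<Rightarrow> 'r \<Rightarrow> real) \<Rightarrow> real" where
  "cost n p y f = (\<Sum>i\<in>{1..n}. \<Sum>\<alpha>\<in>{\<alpha>. \<alpha> \<noteq> 0}. llr p \<alpha> (y i) * f i \<alpha>)"

definition nonzero_vec :: "nat \<Rightarrow> (nat \<Rightarrow> 'r::{ring,finite} \<Rightarrow> real) \<Rightarrow> bool" where
  "nonzero_vec n f \<longleftrightarrow> (\<exists>i\<in>{1..n}. \<exists>\<alpha>. \<alpha> \<noteq> 0 \<and> f i \<alpha> \<noteq> 0)"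

text \<open>(f,w) is a minimizer of Lambda(y) f^T over Q, i.e. a possible output of the LP decoder.\<close>
definition LP_minimizer ::
  "(nat \<Rightarrow> nat \<Rightarrow> 'r::{ring,finite}) \<Rightarrow> nat \<Rightarrow> nat \<Rightarrow> ('s \<Rightarrow> 'r \<Rightarrow> real) \<Rightarrow> (nat \<Rightarrow> 's)
     \<Rightarrow> (nat \<Rightarrow> 'r \<Rightarrow> real) \<Rightarrow> (nat \<Rightarrow> (nat \<Rightarrow> 'r) \<Rightarrow> real) \<Rightarrow> bool" where
  "LP_minimizer H n m p y f w \<longleftrightarrow>
     in_polytope_Q H n m f w \<and>
     (\<forall>f' w'. in_polytope_Q H n m f' w' \<longrightarrow> cost n p y f \<le> cost n p y f')"

definition LP_pseudocodeword ::
  "(nat \<Rightarrow> nat \<Rightarrow> 'r::{ring,finite}) \<Rightarrow> nat \<Rightarrow> nat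
     \<Rightarrow> (nat \<Rightarrow> 'r \<Rightarrow> real) \<Rightarrow> (nat \<Rightarrow> (nat \<Rightarrow> 'r) \<Rightarrow> nat) \<Rightarrow> bool" where
  "LP_pseudocodeword H n m h z \<longleftrightarrow>
     (\<exists>M::nat. \<forall>j\<in>{1..m}.
        (\<Sum>b\<in>local_code H n j. z j b) = M \<and>
        (\<forall>i\<in>supp_row H n j. \<forall>\<alpha>. \<alpha> \<noteq> 0 \<longrightarrow>
            h i \<alpha> = real (\<Sum>b\<in>{b\<in>local_code H n j. b i = \<alpha>}. z j b)))"

end

theory Submission
  imports Defs "HOL-Library.FuncSet"
begin


lemma rat_approx:
  fixes V :: "'v set" and E :: "(('v \<Rightarrow> real) \<times> real) set"
  assumes "finite V"
    and "\<forall>(a,c)\<in>E. (\<forall>v\<in>V. a v \<in> \<rat>) \<and> c \<in> \<rat>"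
    and "\<forall>(a,c)\<in>E. (\<Sum>v\<in>V. a v * x v) = c"
    and "\<epsilon> > 0"
  shows "\<exists>x'. (\<forall>v\<in>V. x' v \<in> \<rat> \<and> \<bar>x' v - x v\<bar> < \<epsilon>) \<and> (\<forall>(a,c)\<in>E. (\<Sum>v\<in>V. a v * x' v) = c)"
  using assms
proof (induction V arbitrary: E x \<epsilon> rule: finite_induct)
  case empty
  then show ?case by auto
next
  case (insert v V0)
  show ?case
  proof (cases "\<exists>(a0,c0)\<in>E. a0 v \<noteq> 0")
    case False
    have E0: "\<forall>(a,c)\<in>E. (\<Sum>u\<in>V0. a u * x u) = c"
    proof clarify
      fix a c assume ac: "(a,c) \<in> E"
      then have "a v = 0" using False by auto
      then show "(\<Sum>u\<in>V0. a u * x u) = c" using insert.prems(2) ac insert.hyps by fastforce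
    qed
    have R0: "\<forall>(a,c)\<in>E. (\<forall>u\<in>V0. a u \<in> \<rat>) \<and> c \<in> \<rat>"
      using insert.prems(1) by auto
    obtain x' where x': "\<forall>u\<in>V0. x' u \<in> \<rat> \<and> \<bar>x' u - x u\<bar> < \<epsilon>"
      "\<forall>(a,c)\<in>E. (\<Sum>u\<in>V0. a u * x' u) = c"
      using insert.IH[OF R0 E0 insert.prems(3)] by blast
    obtain r where r: "r \<in> \<rat>" "x v - \<epsilon> < r" "r < x v + \<epsilon>"
      using Rats_dense_in_real[of "x v - \<epsilon>" "x v + \<epsilon>"] insert.prems(3) by auto
    define xn where "xn = x'(v := r)"
    have s: "(\<Sum>u\<in>V0. a u * xn u) = (\<Sum>u\<in>V0. a u * x' u)" for a
      using insert.hyps(2) unfolding xn_def by (intro sum.cong) auto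
    show ?thesis
    proof (intro exI[of _ xn] conjI)
      show "\<forall>u\<in>insert v V0. xn u \<in> \<rat> \<and> \<bar>xn u - x u\<bar> < \<epsilon>"
        using x'(1) r unfolding xn_def by auto
      show "\<forall>(a,c)\<in>E. (\<Sum>u\<in>insert v V0. a u * xn u) = c"
      proof clarify
        fix a c assume ac: "(a,c) \<in> E"
        then have "a v = 0" using False by auto
        then show "(\<Sum>u\<in>insert v V0. a u * xn u) = c" using x'(2) ac insert.hyps s[of a] by fastforce
      qed
    qed
  next
    case True
    then obtain a0 c0 where a0: "(a0,c0) \<in> E" "a0 v \<noteq> 0" by auto
    define d where "d = a0 v"
    define tr where "tr = (\<lambda>(a::'v\<Rightarrow>real,c::real). (\<lambda>u. a u - a v / d * a0 u, c - a v / d * c0))"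
    define E' where "E' = tr ` E"
    have a0q: "\<forall>u\<in>insert v V0. a0 u \<in> \<rat>" "c0 \<in> \<rat>" using insert.prems(1) a0 by auto
    have dq: "d \<in> \<rat>" unfolding d_def using a0q by auto
    have R': "\<forall>(a,c)\<in>E'. (\<forall>u\<in>V0. a u \<in> \<rat>) \<and> c \<in> \<rat>"
    proof -
      have "(\<forall>u\<in>V0. a u - a v / d * a0 u \<in> \<rat>) \<and> c - a v / d * c0 \<in> \<rat>" if ac: "(a,c) \<in> E" for a c
      proof -
        have "\<forall>u\<in>insert v V0. a u \<in> \<rat>" "c \<in> \<rat>" using insert.prems(1) ac by auto
        then show ?thesis using a0q dq by auto
      qed
      then show ?thesis unfolding E'_def tr_def by auto
    qed
    have key: "(\<Sum>u\<in>V0. (a u - a v / d * a0 u) * z u) =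
        (\<Sum>u\<in>insert v V0. a u * z u) - a v / d * (\<Sum>u\<in>insert v V0. a0 u * z u)" for a z
    proof -
      have "(\<Sum>u\<in>V0. (a u - a v / d * a0 u) * z u) = (\<Sum>u\<in>V0. a u * z u) - a v / d * (\<Sum>u\<in>V0. a0 u * z u)"
        by (simp add: algebra_simps sum_subtractf sum_distrib_left)
      also have "\<dots> = (\<Sum>u\<in>insert v V0. a u * z u) - a v / d * (\<Sum>u\<in>insert v V0. a0 u * z u)"
        using insert.hyps d_def a0(2) by (simp add: field_simps)
      finally show ?thesis .
    qed
    have E0': "\<forall>(a,c)\<in>E'. (\<Sum>u\<in>V0. a u * x u) = c"
    proof -
      have "(\<Sum>u\<in>V0. (a u - a v / d * a0 u) * x u) = c - a v / d * c0" if ac: "(a,c) \<in> E" for a c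
      proof -
        have h1: "(\<Sum>u\<in>insert v V0. a u * x u) = c" using insert.prems(2) ac by fastforce
        have h2: "(\<Sum>u\<in>insert v V0. a0 u * x u) = c0" using insert.prems(2) a0(1) by fastforce
        show ?thesis unfolding key h1 h2 by simp
      qed
      then show ?thesis unfolding E'_def tr_def by auto
    qed
    define K where "K = (\<Sum>u\<in>V0. \<bar>a0 u\<bar>) / \<bar>d\<bar>"
    have K0: "K \<ge> 0" unfolding K_def by (simp add: sum_nonneg)
    define \<epsilon>' where "\<epsilon>' = \<epsilon> / (K + 1)"
    have e'0: "\<epsilon>' > 0" unfolding \<epsilon>'_def using K0 insert.prems(3) by auto
    have e'le: "\<epsilon>' \<le> \<epsilon>" unfolding \<epsilon>'_def using K0 insert.prems(3) by (simp add: field_simps)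
    have Ke': "K * \<epsilon>' < \<epsilon>" unfolding \<epsilon>'_def using K0 insert.prems(3) by (simp add: field_simps)
    obtain x' where x': "\<forall>u\<in>V0. x' u \<in> \<rat> \<and> \<bar>x' u - x u\<bar> < \<epsilon>'"
      "\<forall>(a,c)\<in>E'. (\<Sum>u\<in>V0. a u * x' u) = c"
      using insert.IH[OF R' E0' e'0] by blast
    define xn where "xn = x'(v := (c0 - (\<Sum>u\<in>V0. a0 u * x' u)) / d)"
    have xnV0: "\<forall>u\<in>V0. xn u = x' u" unfolding xn_def using insert.hyps by auto
    have s: "(\<Sum>u\<in>V0. a u * xn u) = (\<Sum>u\<in>V0. a u * x' u)" for a
      using xnV0 by (intro sum.cong) auto
    have xv: "x v = (c0 - (\<Sum>u\<in>V0. a0 u * x u)) / d"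
      using insert.prems(2) a0 insert.hyps d_def by (auto simp: field_simps)
    have a0n: "(\<Sum>u\<in>insert v V0. a0 u * xn u) = c0"
      using insert.hyps s[of a0] a0(2) by (simp add: xn_def d_def field_simps)
    have "\<bar>xn v - x v\<bar> = \<bar>(\<Sum>u\<in>V0. a0 u * (x u - x' u))\<bar> / \<bar>d\<bar>"
      unfolding xv by (simp add: xn_def diff_divide_distrib[symmetric] abs_divide algebra_simps sum_subtractf)
    also have "\<dots> \<le> (\<Sum>u\<in>V0. \<bar>a0 u\<bar> * \<epsilon>') / \<bar>d\<bar>"
    proof (rule divide_right_mono)
      have "\<bar>(\<Sum>u\<in>V0. a0 u * (x u - x' u))\<bar> \<le> (\<Sum>u\<in>V0. \<bar>a0 u * (x u - x' u)\<bar>)"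
        by (rule sum_abs)
      also have "\<dots> \<le> (\<Sum>u\<in>V0. \<bar>a0 u\<bar> * \<epsilon>')"
      proof (rule sum_mono)
        fix u assume "u \<in> V0"
        then have "\<bar>x u - x' u\<bar> \<le> \<epsilon>'" using x'(1) by force
        then show "\<bar>a0 u * (x u - x' u)\<bar> \<le> \<bar>a0 u\<bar> * \<epsilon>'"
          by (simp add: abs_mult mult_left_mono)
      qed
      finally show "\<bar>(\<Sum>u\<in>V0. a0 u * (x u - x' u))\<bar> \<le> (\<Sum>u\<in>V0. \<bar>a0 u\<bar> * \<epsilon>')" .
    qed simp
    also have "\<dots> = K * \<epsilon>'" unfolding K_def by (simp add: sum_distrib_right)
    finally have cv: "\<bar>xn v - x v\<bar> < \<epsilon>" using Ke' by linarith
    show ?thesis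
    proof (intro exI[of _ xn] conjI)
      show "\<forall>u\<in>insert v V0. xn u \<in> \<rat> \<and> \<bar>xn u - x u\<bar> < \<epsilon>"
      proof
        fix u assume u: "u \<in> insert v V0"
        show "xn u \<in> \<rat> \<and> \<bar>xn u - x u\<bar> < \<epsilon>"
        proof (cases "u = v")
          case True
          have "(\<Sum>u\<in>V0. a0 u * x' u) \<in> \<rat>" using a0q x'(1) by (intro Rats_sum) auto
          then have "xn v \<in> \<rat>" unfolding xn_def using a0q dq by auto
          then show ?thesis using True cv by auto
        next
          case False
          then show ?thesis using u x'(1) xnV0 e'le by force
        qed
      qed
      show "\<forall>(a,c)\<in>E. (\<Sum>u\<in>insert v V0. a u * xn u) = c"
      proof (clarify)
        fix a c assume ac: "(a,c) \<in> E"
        have "tr (a,c) \<in> E'" unfolding E'_def using ac by auto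
        then have "(\<Sum>u\<in>V0. (a u - a v / d * a0 u) * x' u) = c - a v / d * c0"
          using x'(2) unfolding tr_def by auto
        then have "(\<Sum>u\<in>V0. (a u - a v / d * a0 u) * xn u) = c - a v / d * c0"
          using s by (metis (no_types, lifting) sum.cong xnV0)
        then show "(\<Sum>u\<in>insert v V0. a u * xn u) = c"
          unfolding key a0n by simp
      qed
    qed
  qed
qed



lemma common_denom:
  fixes g :: "'a \<Rightarrow> real"
  assumes "finite A" "\<forall>a\<in>A. g a \<in> \<rat>"
  shows "\<exists>D::nat. D > 0 \<and> (\<forall>a\<in>A. real D * g a \<in> \<int>)"
  using assms
proof (induction A rule: finite_induct)
  case empty
  then show ?case by (intro exI[of _ 1]) auto
next
  case (insert a A)
  then obtain D where D: "D > 0" "\<forall>a\<in>A. real D * g a \<in> \<int>" by auto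
  have "g a \<in> \<rat>" using insert.prems by auto
  then obtain p q where pq: "q > 0" "g a = of_int p / of_int q" by (rule Rats_cases') auto
  define D' where "D' = D * nat q"
  have D'0: "D' > 0" unfolding D'_def using D pq by auto
  have rD': "real D' = real D * of_int q" unfolding D'_def using pq by simp
  have "real D' * g a \<in> \<int>"
  proof -
    have "real D' * g a = real D * of_int p" unfolding rD' pq using pq by simp
    then show ?thesis by simp
  qed
  moreover have "real D' * g b \<in> \<int>" if "b \<in> A" for b
  proof -
    have e: "real D' * g b = of_int q * (real D * g b)" unfolding rD' by simp
    have "of_int q * (real D * g b) \<in> \<int>" using D(2) that by (rule_tac Ints_mult) auto
    then show ?thesis unfolding e .
  qed
  ultimately show ?case using D'0 by auto
qed



lemma finite_supp: "finite (supp_row H n j)"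
  unfolding supp_row_def by auto

lemma finite_lc: "finite (local_code (H :: nat \<Rightarrow> nat \<Rightarrow> 'r::{ring,finite}) n j)"
proof -
  let ?S = "supp_row H n j"
  let ?A = "{b :: nat \<Rightarrow> 'r. \<forall>i. i \<notin> ?S \<longrightarrow> b i = 0}"
  have "inj_on (\<lambda>b. restrict b ?S) ?A"
  proof (rule inj_onI)
    fix b b' :: "nat \<Rightarrow> 'r" assume "b \<in> ?A" "b' \<in> ?A" "restrict b ?S = restrict b' ?S"
    note h = this
    show "b = b'"
    proof (rule ext)
      fix i show "b i = b' i"
      proof (cases "i \<in> ?S")
        case True
        have "restrict b ?S i = restrict b' ?S i" using h(3) by simp
        then show ?thesis using True by simp
      next
        case False then show ?thesis using h(1,2) by auto
      qed
    qed
  qed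
  moreover have "(\<lambda>b. restrict b ?S) ` ?A \<subseteq> PiE ?S (\<lambda>_. UNIV)" by auto
  moreover have "finite (PiE ?S (\<lambda>_. (UNIV :: 'r set)))"
    using finite_supp by (intro finite_PiE) auto
  ultimately have "finite ?A" by (meson finite_imageD finite_subset)
  then show ?thesis unfolding local_code_def by (rule rev_finite_subset) auto
qed

lemma zero_lc: "(\<lambda>_. 0) \<in> local_code H n j"
  unfolding local_code_def by auto

lemma cost_add: "cost n p y (\<lambda>i \<alpha>. f i \<alpha> + c * e i \<alpha>) = cost n p y f + c * cost n p y e"
  unfolding cost_def by (simp add: algebra_simps sum.distrib sum_distrib_left)

lemma cost_scale: "cost n p y (\<lambda>i \<alpha>. c * e i \<alpha>) = c * cost n p y e"
  unfolding cost_def by (simp add: algebra_simps sum_distrib_left)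

lemma cost_zero: fixes f :: "nat \<Rightarrow> 'r::{ring,finite} \<Rightarrow> real" shows "\<not> nonzero_vec n f \<Longrightarrow> cost n p y f = 0"
  unfolding cost_def nonzero_vec_def
proof (intro sum.neutral ballI)
  fix i and \<alpha> :: 'r assume "\<not> (\<exists>i\<in>{1..n}. \<exists>\<alpha>. \<alpha> \<noteq> 0 \<and> f i \<alpha> \<noteq> 0)" "i \<in> {1..n}" "\<alpha> \<in> {\<alpha>. \<alpha> \<noteq> 0}"
  then show "llr p \<alpha> (y i) * f i \<alpha> = 0" by auto
qed

lemma cost_cong:
  assumes "\<And>i \<alpha>. i \<in> {1..n} \<Longrightarrow> \<alpha> \<noteq> 0 \<Longrightarrow> llr p \<alpha> (y i) * g1 i \<alpha> = llr p \<alpha> (y i) * g2 i \<alpha>"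
  shows "cost n p y g1 = cost n p y g2"
  unfolding cost_def using assms by (intro sum.cong) auto

lemma delta_sum:
  fixes c :: "'r::{ring,finite} \<Rightarrow> real"
  assumes "\<alpha> \<noteq> 0"
  shows "(\<Sum>\<alpha>'\<in>{\<alpha>'. \<alpha>' \<noteq> 0}. c \<alpha>' * (if \<alpha>' = \<alpha> then 1 else 0)) = c \<alpha>"
proof -
  have "(\<Sum>\<alpha>'\<in>{\<alpha>'. \<alpha>' \<noteq> 0}. c \<alpha>' * (if \<alpha>' = \<alpha> then 1 else 0)) = (\<Sum>\<alpha>'\<in>{\<alpha>'. \<alpha>' \<noteq> 0}. if \<alpha>' = \<alpha> then c \<alpha> else 0)"
    by (rule sum.cong) auto
  also have "\<dots> = c \<alpha>" using assms by (simp add: sum.delta)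
  finally show ?thesis .
qed

lemma cost_ind:
  fixes p :: "'s \<Rightarrow> 'r::{ring,finite} \<Rightarrow> real"
  assumes "i \<in> {1..n}" "\<alpha> \<noteq> 0"
  shows "cost n p y (\<lambda>i' \<alpha>'. if i' = i \<and> \<alpha>' = \<alpha> then 1 else 0) = llr p \<alpha> (y i)"
proof -
  have "cost n p y (\<lambda>i' \<alpha>'. if i' = i \<and> \<alpha>' = \<alpha> then 1 else 0)
      = (\<Sum>i'\<in>{1..n}. if i' = i then (\<Sum>\<alpha>'\<in>{\<alpha>'. \<alpha>' \<noteq> 0}. if \<alpha>' = \<alpha> then llr p \<alpha> (y i) else 0) else 0)"
    unfolding cost_def
  proof (intro sum.cong refl)
    fix i' assume "i' \<in> {1..n}"
    show "(\<Sum>\<alpha>'\<in>{\<alpha>'. \<alpha>' \<noteq> 0}. llr p \<alpha>' (y i') * (if i' = i \<and> \<alpha>' = \<alpha> then 1 else 0)) =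
      (if i' = i then \<Sum>\<alpha>'\<in>{\<alpha>'. \<alpha>' \<noteq> 0}. if \<alpha>' = \<alpha> then llr p \<alpha> (y i) else 0 else 0)"
      using delta_sum[OF assms(2), of "\<lambda>\<alpha>'. llr p \<alpha>' (y i)"] by (cases "i' = i") (auto intro!: sum.neutral)
  qed
  also have "\<dots> = llr p \<alpha> (y i)" using assms by (simp add: sum.delta')
  finally show ?thesis .
qed

lemma polytope_add:
  assumes "in_polytope_Q H n m f w"
    and "\<forall>j\<in>{1..m}. \<forall>i\<in>supp_row H n j. \<forall>\<alpha>. \<alpha> \<noteq> 0 \<longrightarrow> e i \<alpha> = 0"
  shows "in_polytope_Q H n m (\<lambda>i \<alpha>. f i \<alpha> + c * e i \<alpha>) w"
  using assms unfolding in_polytope_Q_def by auto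

lemma zero_point:
  "in_polytope_Q H n m (\<lambda>_ _. 0) (\<lambda>j b. if b = (\<lambda>_. 0) then 1 else 0)"
  unfolding in_polytope_Q_def
proof (intro ballI conjI allI impI)
  fix j assume "j \<in> {1..m}"
  show "(\<Sum>b\<in>local_code H n j. if b = (\<lambda>_. 0) then 1 else 0) = (1::real)"
    by (rule trans[OF sum.delta[OF finite_lc, of "\<lambda>_. 0" "\<lambda>_. 1" H n j] if_P[OF zero_lc[of H n j], of "1::real" 0]])
  fix i \<alpha> assume "\<alpha> \<noteq> (0::'a)"
  then show "0 = (\<Sum>b\<in>{b \<in> local_code H n j. b i = \<alpha>}. if b = (\<lambda>_. 0) then 1 else (0::real))"
    by (intro sum.neutral[symmetric]) auto
qed auto

lemma min_le0:
  assumes "LP_minimizer H n m p y f w"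
  shows "cost n p y f \<le> 0"
proof -
  have "cost n p y f \<le> cost n p y (\<lambda>_ _. 0)"
    using assms zero_point unfolding LP_minimizer_def by blast
  then show ?thesis unfolding cost_def by simp
qed

lemma uncov_llr:
  assumes "LP_minimizer H n m p y f w" "i \<in> {1..n}" "\<alpha> \<noteq> 0"
    and "\<not> (\<exists>j\<in>{1..m}. i \<in> supp_row H n j)"
  shows "llr p \<alpha> (y i) = 0"
proof -
  define e where "e = (\<lambda>i' \<alpha>'. if i' = i \<and> \<alpha>' = \<alpha> then 1 else (0::real))"
  have ce: "cost n p y e = llr p \<alpha> (y i)" unfolding e_def using cost_ind assms by blast
  have ez: "\<forall>j\<in>{1..m}. \<forall>i'\<in>supp_row H n j. \<forall>\<alpha>'. \<alpha>' \<noteq> 0 \<longrightarrow> e i' \<alpha>' = 0"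
    using assms(4) unfolding e_def by auto
  have Q: "in_polytope_Q H n m f w" using assms(1) unfolding LP_minimizer_def by auto
  have "cost n p y f \<le> cost n p y (\<lambda>i \<alpha>. f i \<alpha> + c * e i \<alpha>)" for c
    using assms(1) polytope_add[OF Q ez] unfolding LP_minimizer_def by blast
  from this[of 1] this[of "-1"] show ?thesis unfolding cost_add ce by simp
qed



lemma part2:
  fixes H :: "nat \<Rightarrow> nat \<Rightarrow> 'r::{ring,finite}"
  assumes pc: "LP_pseudocodeword H n m h z" and ch: "cost n p y h < 0"
    and mn: "LP_minimizer H n m p y f w"
  shows "nonzero_vec n f"
proof (rule ccontr)
  assume nz: "\<not> nonzero_vec n f"
  then have cf: "cost n p y f = 0" by (rule cost_zero)
  obtain M where M: "\<forall>j\<in>{1..m}. (\<Sum>b\<in>local_code H n j. z j b) = M \<and>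
        (\<forall>i\<in>supp_row H n j. \<forall>\<alpha>. \<alpha> \<noteq> 0 \<longrightarrow>
            h i \<alpha> = real (\<Sum>b\<in>{b\<in>local_code H n j. b i = \<alpha>}. z j b))"
    using pc unfolding LP_pseudocodeword_def by blast
  have Q: "in_polytope_Q H n m f w" using mn unfolding LP_minimizer_def by auto
  show False
  proof (cases "M = 0")
    case True
    have z0: "z j b = 0" if "j \<in> {1..m}" "b \<in> local_code H n j" for j b
      using M that True finite_lc[of H n j] sum_eq_0_iff by blast
    have "\<forall>j\<in>{1..m}. \<forall>i\<in>supp_row H n j. \<forall>\<alpha>. \<alpha> \<noteq> 0 \<longrightarrow> h i \<alpha> = 0"
    proof (intro ballI allI impI)
      fix j i \<alpha> assume j: "j \<in> {1..m}" and i: "i \<in> supp_row H n j" and a: "\<alpha> \<noteq> (0::'r)"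
      have "h i \<alpha> = real (\<Sum>b\<in>{b\<in>local_code H n j. b i = \<alpha>}. z j b)" using M j i a by blast
      also have "\<dots> = 0" using z0[OF j] by (simp add: sum.neutral)
      finally show "h i \<alpha> = 0" .
    qed
    from polytope_add[OF Q this, of 1] mn have "cost n p y f \<le> cost n p y (\<lambda>i \<alpha>. f i \<alpha> + 1 * h i \<alpha>)"
      unfolding LP_minimizer_def by blast
    then show False unfolding cost_add using ch by simp
  next
    case False
    define f' where "f' = (\<lambda>i \<alpha>. (1 / real M) * h i \<alpha>)"
    define w' where "w' = (\<lambda>j b. real (z j b) / real M)"
    have "in_polytope_Q H n m f' w'"
      unfolding in_polytope_Q_def
    proof (intro ballI conjI allI impI)
      fix j assume j: "j \<in> {1..m}"
      show "0 \<le> w' j b" for b unfolding w'_def by simp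
      have "(\<Sum>b\<in>local_code H n j. w' j b) = real (\<Sum>b\<in>local_code H n j. z j b) / real M"
        unfolding w'_def by (simp add: sum_divide_distrib)
      moreover have "(\<Sum>b\<in>local_code H n j. z j b) = M" using M j by blast
      ultimately show "(\<Sum>b\<in>local_code H n j. w' j b) = 1" using False by simp
      fix i and \<alpha> :: 'r assume i: "i \<in> supp_row H n j" and a: "\<alpha> \<noteq> 0"
      have "f' i \<alpha> = real (\<Sum>b\<in>{b\<in>local_code H n j. b i = \<alpha>}. z j b) / real M"
        unfolding f'_def using M j i a by auto
      then show "f' i \<alpha> = (\<Sum>b\<in>{b \<in> local_code H n j. b i = \<alpha>}. w' j b)"
        unfolding w'_def by (simp add: sum_divide_distrib)
    qed
    then have "cost n p y f \<le> cost n p y f'" using mn unfolding LP_minimizer_def by blast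
    moreover have "cost n p y f' < 0" unfolding f'_def cost_scale using ch False
      by (simp add: divide_neg_pos)
    ultimately show False using cf by simp
  qed
qed



lemma sigma_helper:
  fixes H :: "nat \<Rightarrow> nat \<Rightarrow> 'r::{ring,finite}" and g :: "nat \<times> (nat \<Rightarrow> 'r) \<Rightarrow> real"
  assumes j: "j \<in> {1..m}"
  shows "(\<Sum>u\<in>Sigma {1..m} (local_code H n). (if fst u = j \<and> P (snd u) then 1 else 0) * g u)
       = (\<Sum>b\<in>{b\<in>local_code H n j. P b}. g (j, b))"
proof -
  have "(\<Sum>u\<in>Sigma {1..m} (local_code H n). (if fst u = j \<and> P (snd u) then 1 else 0) * g u)
      = (\<Sum>j'\<in>{1..m}. \<Sum>b\<in>local_code H n j'. (if j' = j \<and> P b then 1 else 0) * g (j', b))"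
    by (subst sum.Sigma) (auto simp: finite_lc split_def)
  also have "\<dots> = (\<Sum>j'\<in>{1..m}. if j' = j then (\<Sum>b\<in>local_code H n j. if P b then g (j, b) else 0) else 0)"
    by (intro sum.cong refl) (auto intro!: sum.cong)
  also have "\<dots> = (\<Sum>b\<in>local_code H n j. if P b then g (j, b) else 0)"
    using j by (simp add: sum.delta)
  also have "\<dots> = (\<Sum>b\<in>{b\<in>local_code H n j. P b}. g (j, b))"
    by (simp add: sum.inter_filter finite_lc)
  finally show ?thesis .
qed



definition covered :: "(nat \<Rightarrow> nat \<Rightarrow> 'r::{ring,finite}) \<Rightarrow> nat \<Rightarrow> nat \<Rightarrow> nat \<Rightarrow> bool" where
  "covered H n m i \<longleftrightarrow> (\<exists>j\<in>{1..m}. i \<in> supp_row H n j)"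

definition Jc :: "(nat \<Rightarrow> nat \<Rightarrow> 'r::{ring,finite}) \<Rightarrow> nat \<Rightarrow> nat \<Rightarrow> nat \<Rightarrow> nat" where
  "Jc H n m i = (SOME j. j \<in> {1..m} \<and> i \<in> supp_row H n j)"

definition Fm :: "(nat \<Rightarrow> nat \<Rightarrow> 'r::{ring,finite}) \<Rightarrow> nat \<Rightarrow> nat \<Rightarrow> (nat \<Rightarrow> 'r \<Rightarrow> real)
   \<Rightarrow> (nat \<Rightarrow> (nat \<Rightarrow> 'r) \<Rightarrow> real) \<Rightarrow> nat \<Rightarrow> 'r \<Rightarrow> real" where
  "Fm H n m f g = (\<lambda>i \<alpha>. if covered H n m i then
      (\<Sum>b\<in>{b\<in>local_code H n (Jc H n m i). b i = \<alpha>}. g (Jc H n m i) b) else f i \<alpha>)"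

lemma Jc: "covered H n m i \<Longrightarrow> Jc H n m i \<in> {1..m} \<and> i \<in> supp_row H n (Jc H n m i)"
  unfolding covered_def Jc_def by (rule someI_ex) auto

lemma polyF:
  fixes H :: "nat \<Rightarrow> nat \<Rightarrow> 'r::{ring,finite}"
  assumes nonneg: "\<forall>j\<in>{1..m}. \<forall>b\<in>local_code H n j. g j b \<ge> 0"
    and sum1: "\<forall>j\<in>{1..m}. (\<Sum>b\<in>local_code H n j. g j b) = 1"
    and cons: "\<forall>j\<in>{1..m}. \<forall>j'\<in>{1..m}. \<forall>i. i \<in> supp_row H n j \<longrightarrow> i \<in> supp_row H n j' \<longrightarrow>
        (\<forall>\<alpha>. \<alpha> \<noteq> 0 \<longrightarrow> (\<Sum>b\<in>{b\<in>local_code H n j. b i = \<alpha>}. g j b) = (\<Sum>b\<in>{b\<in>local_code H n j'. b i = \<alpha>}. g j' b))"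
  shows "in_polytope_Q H n m (Fm H n m f g) g"
  unfolding in_polytope_Q_def
proof (intro ballI conjI allI impI)
  fix j assume j: "j \<in> {1..m}"
  show "\<And>b. b \<in> local_code H n j \<Longrightarrow> 0 \<le> g j b" using nonneg j by auto
  show "(\<Sum>b\<in>local_code H n j. g j b) = 1" using sum1 j by auto
  fix i and \<alpha> :: 'r assume i: "i \<in> supp_row H n j" and a: "\<alpha> \<noteq> 0"
  have cv: "covered H n m i" unfolding covered_def using i j by auto
  define J where "J = Jc H n m i"
  from Jc[OF cv] have J: "J \<in> {1..m}" "i \<in> supp_row H n J" unfolding J_def by auto
  have "Fm H n m f g i \<alpha> = (\<Sum>b\<in>{b\<in>local_code H n J. b i = \<alpha>}. g J b)"
    unfolding Fm_def J_def using cv by simp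
  also have "\<dots> = (\<Sum>b\<in>{b \<in> local_code H n j. b i = \<alpha>}. g j b)"
    using cons J j i a by blast
  finally show "Fm H n m f g i \<alpha> = (\<Sum>b\<in>{b \<in> local_code H n j. b i = \<alpha>}. g j b)" .
qed

lemma Fm_Q:
  assumes "in_polytope_Q H n m f w" "\<alpha> \<noteq> 0"
  shows "Fm H n m f w i \<alpha> = f i \<alpha>"
proof (cases "covered H n m i")
  case True
  define J where "J = Jc H n m i"
  from Jc[OF True] have J: "J \<in> {1..m}" "i \<in> supp_row H n J" unfolding J_def by auto
  have "Fm H n m f w i \<alpha> = (\<Sum>b\<in>{b\<in>local_code H n J. b i = \<alpha>}. w J b)"
    unfolding Fm_def J_def using True by simp
  also have "\<dots> = f i \<alpha>" using assms J unfolding in_polytope_Q_def by auto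
  finally show ?thesis .
next
  case False
  then show ?thesis unfolding Fm_def by auto
qed



definition ind :: "nat \<Rightarrow> ((nat \<Rightarrow> 'r) \<Rightarrow> bool) \<Rightarrow> nat \<times> (nat \<Rightarrow> 'r) \<Rightarrow> real" where
  "ind j P u = (if fst u = j \<and> P (snd u) then 1 else 0)"

lemma part1_cov:
  fixes H :: "nat \<Rightarrow> nat \<Rightarrow> 'r::{ring,finite}" and p :: "'s \<Rightarrow> 'r \<Rightarrow> real"
  assumes mn: "LP_minimizer H n m p y f w"
    and i0: "i0 \<in> {1..n}" "\<alpha>0 \<noteq> 0" "f i0 \<alpha>0 \<noteq> 0" "covered H n m i0"
  shows "\<exists>h z. LP_pseudocodeword H n m h z \<and> nonzero_vec n h \<and> cost n p y h \<le> 0"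
proof -
  have Q: "in_polytope_Q H n m f w" using mn unfolding LP_minimizer_def by auto
  have Qw1: "\<And>j b. j \<in> {1..m} \<Longrightarrow> b \<in> local_code H n j \<Longrightarrow> w j b \<ge> 0"
    and Qw2: "\<And>j. j \<in> {1..m} \<Longrightarrow> (\<Sum>b\<in>local_code H n j. w j b) = 1"
    and Qw3: "\<And>j i \<alpha>. j \<in> {1..m} \<Longrightarrow> i \<in> supp_row H n j \<Longrightarrow> \<alpha> \<noteq> 0 \<Longrightarrow>
        f i \<alpha> = (\<Sum>b\<in>{b\<in>local_code H n j. b i = \<alpha>}. w j b)"
    using Q unfolding in_polytope_Q_def by auto
  define V where "V = Sigma {1..m} (local_code H n)"
  have finV: "finite V" unfolding V_def by (intro finite_SigmaI finite_lc) auto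
  have s0: "(\<Sum>u\<in>V. ind j P u * xx u) = (\<Sum>b\<in>{b\<in>local_code H n j. P b}. xx (j, b))"
    if "j \<in> {1..m}" for j P and xx :: "nat \<times> (nat \<Rightarrow> 'r) \<Rightarrow> real"
    unfolding V_def ind_def using sigma_helper[OF that] by blast
  have s1: "(\<Sum>u\<in>V. ind j (\<lambda>_. True) u * xx u) = (\<Sum>b\<in>local_code H n j. xx (j, b))"
    if "j \<in> {1..m}" for j and xx :: "nat \<times> (nat \<Rightarrow> 'r) \<Rightarrow> real"
    using s0[OF that, of "\<lambda>_. True" xx] by simp
  have s2: "(\<Sum>u\<in>V. (ind j P u - ind j' P u) * xx u) =
       (\<Sum>b\<in>{b\<in>local_code H n j. P b}. xx (j, b)) - (\<Sum>b\<in>{b\<in>local_code H n j'. P b}. xx (j', b))"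
    if "j \<in> {1..m}" "j' \<in> {1..m}" for j j' P and xx :: "nat \<times> (nat \<Rightarrow> 'r) \<Rightarrow> real"
    using s0[OF that(1), of P xx] s0[OF that(2), of P xx]
    by (simp add: left_diff_distrib sum_subtractf)
  have s3: "(\<Sum>u\<in>V. (if u = v then 1 else 0) * xx u) = xx v"
    if "v \<in> V" for v and xx :: "nat \<times> (nat \<Rightarrow> 'r) \<Rightarrow> real"
  proof -
    have "(\<Sum>u\<in>V. (if u = v then 1 else 0) * xx u) = (\<Sum>u\<in>V. if u = v then xx v else 0)"
      by (rule sum.cong) auto
    also have "\<dots> = xx v" using that finV by (simp add: sum.delta)
    finally show ?thesis .
  qed
  define E1 :: "((nat \<times> (nat \<Rightarrow> 'r) \<Rightarrow> real) \<times> real) set" where "E1 = {(ind j (\<lambda>_. True), 1::real) | j. j \<in> {1..m}}"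
  define E2 :: "((nat \<times> (nat \<Rightarrow> 'r) \<Rightarrow> real) \<times> real) set" where "E2 = {(\<lambda>u. ind j (\<lambda>b. b i = \<alpha>) u - ind j' (\<lambda>b. b i = \<alpha>) u, 0::real) | j j' i \<alpha>.
      j \<in> {1..m} \<and> j' \<in> {1..m} \<and> i \<in> supp_row H n j \<and> i \<in> supp_row H n j' \<and> \<alpha> \<noteq> 0}"
  define E3 :: "((nat \<times> (nat \<Rightarrow> 'r) \<Rightarrow> real) \<times> real) set" where "E3 = {(\<lambda>u. if u = v then 1 else 0, 0::real) | v. v \<in> V \<and> w (fst v) (snd v) = 0}"
  define E where "E = E1 \<union> E2 \<union> E3"
  define x where "x = (\<lambda>u. w (fst u) (snd u))"
  have hE_rat: "\<forall>(a,c)\<in>E. (\<forall>v\<in>V. a v \<in> \<rat>) \<and> c \<in> \<rat>"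
    unfolding E_def E1_def E2_def E3_def ind_def by auto
  have hE_x: "\<forall>(a,c)\<in>E. (\<Sum>v\<in>V. a v * x v) = c"
  proof -
    have "(\<Sum>v\<in>V. a v * x v) = c" if "(a,c) \<in> E1" for a c
      using that s1 Qw2 unfolding E1_def x_def by auto
    moreover have "(\<Sum>v\<in>V. a v * x v) = c" if a2: "(a,c) \<in> E2" for a c
    proof -
      obtain j j' i \<alpha> where d: "a = (\<lambda>u. ind j (\<lambda>b. b i = \<alpha>) u - ind j' (\<lambda>b. b i = \<alpha>) u)" "c = 0"
        "j \<in> {1..m}" "j' \<in> {1..m}" "i \<in> supp_row H n j" "i \<in> supp_row H n j'" "\<alpha> \<noteq> 0"
        using a2 unfolding E2_def by blast
      show ?thesis unfolding d(1,2) s2[OF d(3,4)] x_def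
        using Qw3[OF d(3,5,7)] Qw3[OF d(4,6,7)] by simp
    qed
    moreover have "(\<Sum>v\<in>V. a v * x v) = c" if "(a,c) \<in> E3" for a c
      using that s3 unfolding E3_def x_def by auto
    ultimately show ?thesis unfolding E_def by auto
  qed
  have sat: "(\<forall>j\<in>{1..m}. (\<Sum>b\<in>local_code H n j. xx (j, b)) = 1) \<and>
     (\<forall>j\<in>{1..m}. \<forall>j'\<in>{1..m}. \<forall>i. i \<in> supp_row H n j \<longrightarrow> i \<in> supp_row H n j' \<longrightarrow>
        (\<forall>\<alpha>. \<alpha> \<noteq> 0 \<longrightarrow> (\<Sum>b\<in>{b\<in>local_code H n j. b i = \<alpha>}. xx (j, b)) = (\<Sum>b\<in>{b\<in>local_code H n j'. b i = \<alpha>}. xx (j', b)))) \<and>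
     (\<forall>v\<in>V. w (fst v) (snd v) = 0 \<longrightarrow> xx v = 0)"
    if hx: "\<forall>(a,c)\<in>E. (\<Sum>v\<in>V. a v * xx v) = c" for xx
  proof (intro conjI ballI allI impI)
    fix j assume j: "j \<in> {1..m}"
    have "(ind j (\<lambda>_. True), 1) \<in> E" unfolding E_def E1_def using j by auto
    then show "(\<Sum>b\<in>local_code H n j. xx (j, b)) = 1" using hx s1[OF j, of xx] by auto
  next
    fix j j' i and \<alpha> :: 'r assume d: "j \<in> {1..m}" "j' \<in> {1..m}" "i \<in> supp_row H n j" "i \<in> supp_row H n j'" "\<alpha> \<noteq> 0"
    have "(\<lambda>u. ind j (\<lambda>b. b i = \<alpha>) u - ind j' (\<lambda>b. b i = \<alpha>) u, 0) \<in> E"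
      unfolding E_def E2_def using d by blast
    then have "(\<Sum>u\<in>V. (ind j (\<lambda>b. b i = \<alpha>) u - ind j' (\<lambda>b. b i = \<alpha>) u) * xx u) = 0" using hx by auto
    then show "(\<Sum>b\<in>{b\<in>local_code H n j. b i = \<alpha>}. xx (j, b)) = (\<Sum>b\<in>{b\<in>local_code H n j'. b i = \<alpha>}. xx (j', b))"
      unfolding s2[OF d(1,2)] by simp
  next
    fix v assume v: "v \<in> V" "w (fst v) (snd v) = 0"
    have "(\<lambda>u. if u = v then 1 else 0, 0) \<in> E" unfolding E_def E3_def using v by blast
    then have "(\<Sum>u\<in>V. (if u = v then 1 else 0) * xx u) = 0" using hx by auto
    then show "xx v = 0" unfolding s3[OF v(1)] .
  qed
  define J1 where "J1 = Jc H n m i0"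
  have J1: "J1 \<in> {1..m}" "i0 \<in> supp_row H n J1" using Jc[OF i0(4)] unfolding J1_def by auto
  define \<delta> where "\<delta> = \<bar>f i0 \<alpha>0\<bar> / (real (card (local_code H n J1)) + 1)"
  have \<delta>0: "\<delta> > 0" unfolding \<delta>_def using i0(3) by auto
  define Pos where "Pos = x ` {u\<in>V. x u > 0}"
  define \<epsilon> where "\<epsilon> = Min (insert \<delta> Pos)"
  have finP: "finite (insert \<delta> Pos)" unfolding Pos_def using finV by auto
  have "\<epsilon> \<in> insert \<delta> Pos" unfolding \<epsilon>_def using finP by (intro Min_in) auto
  then have \<epsilon>0: "\<epsilon> > 0" using \<delta>0 unfolding Pos_def by auto
  have \<epsilon>\<delta>: "\<epsilon> \<le> \<delta>" unfolding \<epsilon>_def using finP by (intro Min_le) auto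
  have \<epsilon>x: "\<epsilon> \<le> x u" if "u \<in> V" "x u > 0" for u
    unfolding \<epsilon>_def using finP that unfolding Pos_def by (intro Min_le) auto
  obtain x' where x': "\<forall>v\<in>V. x' v \<in> \<rat> \<and> \<bar>x' v - x v\<bar> < \<epsilon>" "\<forall>(a,c)\<in>E. (\<Sum>v\<in>V. a v * x' v) = c"
    using rat_approx[OF finV hE_rat hE_x \<epsilon>0] by blast
  note satx = sat[OF hE_x] and satx' = sat[OF x'(2)]
  define w' where "w' = (\<lambda>j b. x' (j, b))"
  define w'' where "w'' = (\<lambda>j b. 2 * w j b - x' (j, b))"
  have nn: "x' (j, b) \<ge> 0 \<and> 2 * w j b - x' (j, b) \<ge> 0" if "j \<in> {1..m}" "b \<in> local_code H n j" for j b
  proof -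
    have u: "(j, b) \<in> V" unfolding V_def using that by auto
    show ?thesis
    proof (cases "w j b = 0")
      case True
      then have "x' (j, b) = 0" using satx' u by auto
      then show ?thesis using True by simp
    next
      case False
      then have "x (j, b) > 0" unfolding x_def using Qw1[OF that] by auto
      then have "\<epsilon> \<le> x (j, b)" using \<epsilon>x u by auto
      moreover have "\<bar>x' (j, b) - x (j, b)\<bar> < \<epsilon>" using x'(1) u by auto
      ultimately show ?thesis unfolding x_def by auto
    qed
  qed
  have sumw'': "(\<Sum>b\<in>B. w'' j b) = 2 * (\<Sum>b\<in>B. w j b) - (\<Sum>b\<in>B. x' (j, b))" for B j
    unfolding w''_def by (simp add: sum_subtractf sum_distrib_left)
  have Q': "in_polytope_Q H n m (Fm H n m f w') w'"
  proof (rule polyF)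
    show "\<forall>j\<in>{1..m}. \<forall>b\<in>local_code H n j. 0 \<le> w' j b" unfolding w'_def using nn by auto
    show "\<forall>j\<in>{1..m}. (\<Sum>b\<in>local_code H n j. w' j b) = 1" unfolding w'_def using satx' by auto
    show "\<forall>j\<in>{1..m}. \<forall>j'\<in>{1..m}. \<forall>i. i \<in> supp_row H n j \<longrightarrow> i \<in> supp_row H n j' \<longrightarrow>
        (\<forall>\<alpha>. \<alpha> \<noteq> 0 \<longrightarrow> (\<Sum>b\<in>{b\<in>local_code H n j. b i = \<alpha>}. w' j b) = (\<Sum>b\<in>{b\<in>local_code H n j'. b i = \<alpha>}. w' j' b))"
      unfolding w'_def using satx' by blast
  qed
  have Q'': "in_polytope_Q H n m (Fm H n m f w'') w''"
  proof (rule polyF)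
    show "\<forall>j\<in>{1..m}. \<forall>b\<in>local_code H n j. 0 \<le> w'' j b" unfolding w''_def using nn by auto
    show "\<forall>j\<in>{1..m}. (\<Sum>b\<in>local_code H n j. w'' j b) = 1" unfolding sumw'' using satx' Qw2 by auto
    show "\<forall>j\<in>{1..m}. \<forall>j'\<in>{1..m}. \<forall>i. i \<in> supp_row H n j \<longrightarrow> i \<in> supp_row H n j' \<longrightarrow>
        (\<forall>\<alpha>. \<alpha> \<noteq> 0 \<longrightarrow> (\<Sum>b\<in>{b\<in>local_code H n j. b i = \<alpha>}. w'' j b) = (\<Sum>b\<in>{b\<in>local_code H n j'. b i = \<alpha>}. w'' j' b))"
    proof (intro ballI allI impI)
      fix j j' i \<alpha> assume d: "j \<in> {1..m}" "j' \<in> {1..m}" "i \<in> supp_row H n j" "i \<in> supp_row H n j'" "\<alpha> \<noteq> (0::'r)"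
      have "(\<Sum>b\<in>{b\<in>local_code H n j. b i = \<alpha>}. x' (j, b)) = (\<Sum>b\<in>{b\<in>local_code H n j'. b i = \<alpha>}. x' (j', b))"
        using satx' d by blast
      moreover have "(\<Sum>b\<in>{b\<in>local_code H n j. b i = \<alpha>}. w j b) = (\<Sum>b\<in>{b\<in>local_code H n j'. b i = \<alpha>}. w j' b)"
        using Qw3[OF d(1,3,5)] Qw3[OF d(2,4,5)] by simp
      ultimately show "(\<Sum>b\<in>{b\<in>local_code H n j. b i = \<alpha>}. w'' j b) = (\<Sum>b\<in>{b\<in>local_code H n j'. b i = \<alpha>}. w'' j' b)"
        unfolding sumw'' by simp
    qed
  qed
  define f' where "f' = Fm H n m f w'"
  define f'' where "f'' = Fm H n m f w''"
  have f''eq: "f'' i \<alpha> = 2 * f i \<alpha> + (-1) * f' i \<alpha>" if "\<alpha> \<noteq> 0" for i \<alpha>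
  proof -
    have "f'' i \<alpha> = 2 * Fm H n m f w i \<alpha> - f' i \<alpha>"
      unfolding f''_def f'_def Fm_def sumw'' w'_def by simp
    then show ?thesis using Fm_Q[OF Q that] by simp
  qed
  have cf'': "cost n p y f'' = 2 * cost n p y f - cost n p y f'"
  proof -
    have "cost n p y f'' = cost n p y (\<lambda>i \<alpha>. 2 * f i \<alpha> + (-1) * f' i \<alpha>)"
      by (rule cost_cong) (simp add: f''eq)
    also have "\<dots> = 2 * cost n p y f - cost n p y f'"
      using cost_add[of n p y "\<lambda>i \<alpha>. 2 * f i \<alpha>" "-1" f'] cost_scale[of n p y 2 f] by simp
    finally show ?thesis .
  qed
  have "cost n p y f \<le> cost n p y f''" using mn Q'' unfolding LP_minimizer_def f''_def by blast
  then have cf': "cost n p y f' \<le> 0" using cf'' min_le0[OF mn] by simp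
  define B where "B = {b\<in>local_code H n J1. b i0 = \<alpha>0}"
  have finB: "finite B" unfolding B_def using finite_lc[of H n J1] by auto
  have f'i0: "f' i0 \<alpha>0 = (\<Sum>b\<in>B. x' (J1, b))"
    unfolding f'_def Fm_def B_def J1_def w'_def using i0(4) by simp
  have fi0: "f i0 \<alpha>0 = (\<Sum>b\<in>B. w J1 b)" unfolding B_def using Qw3[OF J1 i0(2)] .
  have "\<bar>f' i0 \<alpha>0 - f i0 \<alpha>0\<bar> = \<bar>\<Sum>b\<in>B. (x' (J1, b) - w J1 b)\<bar>"
    unfolding f'i0 fi0 by (simp add: sum_subtractf)
  also have "\<dots> \<le> (\<Sum>b\<in>B. \<bar>x' (J1, b) - w J1 b\<bar>)" by (rule sum_abs)
  also have "\<dots> \<le> (\<Sum>b\<in>B. \<epsilon>)"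
  proof (rule sum_mono)
    fix b assume "b \<in> B"
    then have "(J1, b) \<in> V" unfolding B_def V_def using J1 by auto
    then show "\<bar>x' (J1, b) - w J1 b\<bar> \<le> \<epsilon>" using x'(1) unfolding x_def by force
  qed
  also have "\<dots> = real (card B) * \<epsilon>" by simp
  also have "\<dots> \<le> real (card (local_code H n J1)) * \<delta>"
  proof (rule mult_mono)
    have "card B \<le> card (local_code H n J1)" unfolding B_def by (rule card_mono[OF finite_lc]) auto
    then show "real (card B) \<le> real (card (local_code H n J1))" by simp
  qed (use \<epsilon>\<delta> \<epsilon>0 in auto)
  also have "\<dots> < \<bar>f i0 \<alpha>0\<bar>"
  proof -
    let ?c = "real (card (local_code H n J1))"
    have "?c * \<delta> = \<bar>f i0 \<alpha>0\<bar> * (?c / (?c + 1))" unfolding \<delta>_def by simp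
    also have "\<dots> < \<bar>f i0 \<alpha>0\<bar> * 1"
      using i0(3) by (intro mult_strict_left_mono) auto
    finally show ?thesis by simp
  qed
  finally have f'nz: "f' i0 \<alpha>0 \<noteq> 0" by auto
  have "\<forall>v\<in>V. x' v \<in> \<rat>" using x'(1) by auto
  from common_denom[OF finV this] obtain D :: nat where D: "D > 0" "\<forall>v\<in>V. real D * x' v \<in> \<int>"
    by blast
  define z where "z = (\<lambda>j b. nat \<lfloor>real D * x' (j, b)\<rfloor>)"
  have zr: "real (z j b) = real D * x' (j, b)" if "j \<in> {1..m}" "b \<in> local_code H n j" for j b
  proof -
    have "(j, b) \<in> V" unfolding V_def using that by auto
    then obtain k where k: "real D * x' (j, b) = of_int k" using D(2) Ints_cases by metis
    have "real D * x' (j, b) \<ge> 0" using nn[OF that] by simp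
    then have "k \<ge> 0" using k by simp
    then show ?thesis unfolding z_def k by simp
  qed
  define h where "h = (\<lambda>i \<alpha>. if covered H n m i then real D * f' i \<alpha> else 0)"
  have pc: "LP_pseudocodeword H n m h z"
    unfolding LP_pseudocodeword_def
  proof (intro exI[of _ D] ballI conjI allI impI)
    fix j assume j: "j \<in> {1..m}"
    have "real (\<Sum>b\<in>local_code H n j. z j b) = (\<Sum>b\<in>local_code H n j. real D * x' (j, b))"
      unfolding of_nat_sum using zr[OF j] by (intro sum.cong) auto
    also have "\<dots> = real D" using satx' j by (simp add: sum_distrib_left[symmetric])
    finally show "(\<Sum>b\<in>local_code H n j. z j b) = D" by (simp only: of_nat_eq_iff)
    fix i and \<alpha> :: 'r assume i: "i \<in> supp_row H n j" and a: "\<alpha> \<noteq> 0"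
    have cv: "covered H n m i" unfolding covered_def using i j by auto
    have "h i \<alpha> = real D * f' i \<alpha>" unfolding h_def using cv by simp
    also have "\<dots> = real D * (\<Sum>b\<in>{b\<in>local_code H n j. b i = \<alpha>}. x' (j, b))"
      using Q' j i a unfolding in_polytope_Q_def f'_def w'_def by auto
    also have "\<dots> = (\<Sum>b\<in>{b\<in>local_code H n j. b i = \<alpha>}. real (z j b))"
      unfolding sum_distrib_left using zr[OF j] by (intro sum.cong) auto
    also have "\<dots> = real (\<Sum>b\<in>{b\<in>local_code H n j. b i = \<alpha>}. z j b)" by simp
    finally show "h i \<alpha> = real (\<Sum>b\<in>{b\<in>local_code H n j. b i = \<alpha>}. z j b)" .
  qed
  have nzh: "nonzero_vec n h"
    unfolding nonzero_vec_def h_def using i0 f'nz D(1) by auto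
  have "cost n p y h = cost n p y (\<lambda>i \<alpha>. real D * f' i \<alpha>)"
  proof (rule cost_cong)
    fix i and \<alpha> :: 'r assume i: "i \<in> {1..n}" and a: "\<alpha> \<noteq> 0"
    show "llr p \<alpha> (y i) * h i \<alpha> = llr p \<alpha> (y i) * (real D * f' i \<alpha>)"
    proof (cases "covered H n m i")
      case True then show ?thesis unfolding h_def by simp
    next
      case False
      then have "llr p \<alpha> (y i) = 0" using uncov_llr[OF mn i a] unfolding covered_def by blast
      then show ?thesis by simp
    qed
  qed
  also have "\<dots> = real D * cost n p y f'" by (rule cost_scale)
  finally have "cost n p y h \<le> 0" using cf' by (simp add: mult_nonneg_nonpos)
  then show ?thesis using pc nzh by blast
qed


theorem theorem2:
  fixes H :: "nat \<Rightarrow> nat \<Rightarrow> 'r::{ring,finite}"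
    and n m :: nat
    and p :: "'s \<Rightarrow> 'r \<Rightarrow> real"
    and y :: "nat \<Rightarrow> 's"
  shows
    "(\<forall>f w. LP_minimizer H n m p y f w \<and> nonzero_vec n f \<longrightarrow>
        (\<exists>h z. LP_pseudocodeword H n m h z \<and> nonzero_vec n h \<and> cost n p y h \<le> 0))
     \<and>
     ((\<exists>h z. LP_pseudocodeword H n m h z \<and> nonzero_vec n h \<and> cost n p y h < 0) \<longrightarrow>
        (\<forall>f w. LP_minimizer H n m p y f w \<longrightarrow> nonzero_vec n f))"
proof (intro conjI allI impI)
  fix f w assume a: "LP_minimizer H n m p y f w \<and> nonzero_vec n f"
  then obtain i0 and \<alpha>0 :: 'r where i0: "i0 \<in> {1..n}" "\<alpha>0 \<noteq> 0" "f i0 \<alpha>0 \<noteq> 0"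
    unfolding nonzero_vec_def by blast
  show "\<exists>h z. LP_pseudocodeword H n m h z \<and> nonzero_vec n h \<and> cost n p y h \<le> 0"
  proof (cases "covered H n m i0")
    case True
    then show ?thesis using part1_cov[of H n m p y f w i0 \<alpha>0] a i0 by blast
  next
    case False
    define h where "h = (\<lambda>i \<alpha>. if i = i0 \<and> \<alpha> = \<alpha>0 then 1 else (0::real))"
    define z where "z = (\<lambda>(j::nat) (b::nat \<Rightarrow> 'r). 0::nat)"
    have "LP_pseudocodeword H n m h z"
      unfolding LP_pseudocodeword_def
    proof (intro exI[of _ 0] ballI conjI allI impI)
      fix j assume j: "j \<in> {1..m}"
      show "(\<Sum>b\<in>local_code H n j. z j b) = 0" unfolding z_def by simp
      fix i and \<alpha> :: 'r assume "i \<in> supp_row H n j" "\<alpha> \<noteq> 0"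
      then have "i \<noteq> i0" using False j unfolding covered_def by auto
      then show "h i \<alpha> = real (\<Sum>b\<in>{b \<in> local_code H n j. b i = \<alpha>}. z j b)"
        unfolding h_def z_def by simp
    qed
    moreover have "nonzero_vec n h" unfolding nonzero_vec_def h_def using i0 by auto
    moreover have "cost n p y h = 0"
      unfolding h_def cost_ind[OF i0(1,2)]
      using uncov_llr[of H n m p y f w i0 \<alpha>0] a i0 False unfolding covered_def by blast
    ultimately show ?thesis by fastforce
  qed
next
  fix f w
  assume "\<exists>h z. LP_pseudocodeword H n m h z \<and> nonzero_vec n h \<and> cost n p y h < 0"
    and "LP_minimizer H n m p y f w"
  then show "nonzero_vec n f" using part2 by blast
qed

end
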